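(* Let $X$ be a Polish space and $T$ a continuous self-map of $X$ admitting an invariant Borel probability measure $m$. Let $\mathbf G$ be a compact abelian group acting continuously on $X$, and assume that $T(gx)=\beta(g)T(x)$ for all $g\in\mathbf G$ and $x\in X$, where $\beta:\mathbf G\to\mathbf G$ is a continuous map preserving the Haar measure of $\mathbf G$. Define $\widetilde m(A)=\int_{\mathbf G}m(g^{-1}A)\,dg$ for Borel $A\subseteq X$, where $dg$ is the normalized Haar measure. Then $\widetilde m$ is $\mathbf G$-invariant, and for every $g\in\mathbf G$ it is invariant under both maps $x\mapsto gT(x)$ and $x\mapsto T(gx)$.
   Context: A measure $m$ is invariant under a Borel map $S$ if $m(S^{-1}A)=m(A)$ for all Borel $A$; $\mathbf G$-invariance means $\widetilde m(gA)=\widetilde m(A)$ for all $g$ and Borel $A$. *)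

theory Defs
  imports "HOL-Probability.Probability"
begin

text \<open>The compact abelian group G is written additively (type class
  topological_ab_group_add), so g^{-1} is uminus g and the action g x is act g x.\<close>

definition normalized_haar :: "('g::topological_ab_group_add) measure \<Rightarrow> bool" where
  "normalized_haar H \<longleftrightarrow> prob_space H \<and> sets H = sets borel \<and>
     (\<forall>g. \<forall>A\<in>sets borel. emeasure H ((\<lambda>h. g + h) ` A) = emeasure H A)"

definition mtilde :: "'g measure \<Rightarrow> ('g::ab_group_add \<Rightarrow> 'x \<Rightarrow> 'x) \<Rightarrow> 'x measure \<Rightarrow> 'x set \<Rightarrow> ennreal" where
  "mtilde H act m A = (\<integral>\<^sup>+ g. emeasure m (act (- g) ` A) \<partial>H)"

end

theory Submission
  imports Defs
begin

lemma open_in_pair_borel: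
  fixes W :: "('a::topological_space \<times> 'b::second_countable_topology) set"
  assumes "open W"
  shows "W \<in> sets (borel \<Otimes>\<^sub>M borel)"
proof -
  obtain B :: "'b set set" where B: "countable B" "topological_basis B"
    using ex_countable_basis by blast
  define U where "U V = \<Union>{S. open S \<and> S \<times> V \<subseteq> W}" for V
  have "W = (\<Union>V\<in>B. U V \<times> V)"
  proof
    show "W \<subseteq> (\<Union>V\<in>B. U V \<times> V)"
    proof
      fix p assume "p \<in> W"
      then obtain S R where SR: "open S" "open R" "p \<in> S \<times> R" "S \<times> R \<subseteq> W"
        using open_prod_elim[OF assms] by metis
      obtain V where V: "V \<in> B" "snd p \<in> V" "V \<subseteq> R"
        using topological_basisE[OF B(2) SR(2)] SR(3) by (metis mem_Times_iff)
      have "S \<times> V \<subseteq> W" using SR(4) V(3) by blast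
      hence "fst p \<in> U V" unfolding U_def using SR(1,3) by auto
      thus "p \<in> (\<Union>V\<in>B. U V \<times> V)" using V by (metis UN_I mem_Times_iff)
    qed
  qed (auto simp: U_def)
  moreover have "(\<Union>V\<in>B. U V \<times> V) \<in> sets (borel \<Otimes>\<^sub>M borel)"
  proof (rule sets.countable_UN'')
    show "countable B" by fact
    fix V assume "V \<in> B"
    hence "open V" using B(2) topological_basis_open by blast
    moreover have "open (U V)" unfolding U_def by auto
    ultimately show "U V \<times> V \<in> sets (borel \<Otimes>\<^sub>M borel)" by auto
  qed
  ultimately show ?thesis by simp
qed

theorem proposition6p1:
  fixes T :: "'x::polish_space \<Rightarrow> 'x"
    and m :: "'x measure"
    and act :: "'g::{topological_ab_group_add, t2_space} \<Rightarrow> 'x \<Rightarrow> 'x"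
    and \<beta> :: "'g \<Rightarrow> 'g"
    and H :: "'g measure"
  assumes T_cont: "continuous_on UNIV T"
    and m_prob: "prob_space m" and m_sets: "sets m = sets borel"
    and m_inv: "\<forall>A\<in>sets borel. emeasure m (T -` A) = emeasure m A"
    and G_compact: "compact (UNIV :: 'g set)"
    and act_cont: "continuous_on UNIV (\<lambda>p::'g \<times> 'x. act (fst p) (snd p))"
    and act_zero: "\<forall>x. act 0 x = x"
    and act_add: "\<forall>g h x. act (g + h) x = act g (act h x)"
    and equivariant: "\<forall>g x. T (act g x) = act (\<beta> g) (T x)"
    and \<beta>_cont: "continuous_on UNIV \<beta>"
    and haar: "normalized_haar H"
    and \<beta>_haar: "\<forall>A\<in>sets borel. emeasure H (\<beta> -` A) = emeasure H A"
  shows "(\<forall>g. \<forall>A\<in>sets borel. mtilde H act m (act g ` A) = mtilde H act m A)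
       \<and> (\<forall>g. \<forall>A\<in>sets borel. mtilde H act m ((\<lambda>x. act g (T x)) -` A) = mtilde H act m A)
       \<and> (\<forall>g. \<forall>A\<in>sets borel. mtilde H act m ((\<lambda>x. T (act g x)) -` A) = mtilde H act m A)"
proof -
  have spm: "space m = UNIV" using m_sets sets_eq_imp_space_eq by fastforce
  have sH: "sets H = sets borel" and spH: "space H = UNIV" and Hprob: "prob_space H"
    using haar unfolding normalized_haar_def by (auto dest: sets_eq_imp_space_eq)
  interpret m: prob_space m by (rule m_prob)
  have actk_cont: "continuous_on UNIV (act k)" for k
  proof -
    have "continuous_on UNIV ((\<lambda>p::'g \<times> 'x. act (fst p) (snd p)) \<circ> (\<lambda>x. (k, x)))"
      by (rule continuous_on_compose) (auto intro!: continuous_intros continuous_on_subset[OF act_cont])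
    thus ?thesis by (simp add: o_def)
  qed
  have pre_borel: "act k -` A \<in> sets borel" if "A \<in> sets borel" for k A
    using borel_measurable_continuous_onI[OF actk_cont[of k]] that
    by (metis measurable_sets space_borel vimage_Int inf_top.right_neutral)
  have img: "act (- g) ` A = act g -` A" for g A
  proof
    show "act (- g) ` A \<subseteq> act g -` A"
      using act_add act_zero by (auto simp flip: act_add)
    show "act g -` A \<subseteq> act (- g) ` A"
    proof
      fix x assume "x \<in> act g -` A"
      moreover have "x = act (- g) (act g x)" by (metis act_add act_zero add.left_inverse)
      ultimately show "x \<in> act (- g) ` A" by blast
    qed
  qed
  define \<phi> where "\<phi> A k = emeasure m (act k -` A)" for A k
  have mt: "mtilde H act m A = (\<integral>\<^sup>+ k. \<phi> A k \<partial>H)" for A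
    unfolding mtilde_def \<phi>_def img ..
  have actP_meas: "(\<lambda>p::'g \<times> 'x. act (fst p) (snd p)) \<in> borel_measurable (borel \<Otimes>\<^sub>M borel)"
  proof (rule borel_measurableI)
    fix S :: "'x set" assume "open S"
    have "open ((\<lambda>p::'g \<times> 'x. act (fst p) (snd p)) -` S)"
      using act_cont \<open>open S\<close> by (simp add: continuous_on_open_vimage)
    thus "(\<lambda>p::'g \<times> 'x. act (fst p) (snd p)) -` S \<inter> space (borel \<Otimes>\<^sub>M borel) \<in> sets (borel \<Otimes>\<^sub>M borel)"
      by (simp add: open_in_pair_borel)
  qed
  have phi_meas: "\<phi> A \<in> borel_measurable borel" if A: "A \<in> sets borel" for A
  proof -
    let ?Q = "(\<lambda>p::'g \<times> 'x. act (fst p) (snd p)) -` A \<inter> space (borel \<Otimes>\<^sub>M borel)"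
    have "?Q \<in> sets (borel \<Otimes>\<^sub>M borel)" using measurable_sets[OF actP_meas A] .
    also have "sets (borel \<Otimes>\<^sub>M borel) = sets ((borel::'g measure) \<Otimes>\<^sub>M m)"
      using m_sets by (intro sets_pair_measure_cong) auto
    finally have "(\<lambda>k. emeasure m (Pair k -` ?Q)) \<in> borel_measurable borel"
      by (rule m.measurable_emeasure_Pair)
    moreover have "Pair k -` ?Q = act k -` A" for k by (auto simp: space_pair_measure)
    ultimately show ?thesis unfolding \<phi>_def by simp
  qed
  have phi_measH: "\<phi> A \<in> borel_measurable H" if "A \<in> sets borel" for A
    unfolding measurable_cong_sets[OF sH refl] by (rule phi_meas[OF that])
  have \<beta>_meas: "\<beta> \<in> measurable H H"
    unfolding measurable_cong_sets[OF sH sH] by (rule borel_measurable_continuous_onI[OF \<beta>_cont])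
  have distr_\<beta>: "distr H H \<beta> = H"
  proof (rule measure_eqI)
    fix B assume "B \<in> sets (distr H H \<beta>)"
    hence B: "B \<in> sets borel" using sH by simp
    show "emeasure (distr H H \<beta>) B = emeasure H B"
      using emeasure_distr[OF \<beta>_meas] B sH spH \<beta>_haar by auto
  qed simp
  have tr_meas: "(\<lambda>h. h + c) \<in> measurable H H" for c :: 'g
    unfolding measurable_cong_sets[OF sH sH]
    by (rule borel_measurable_continuous_onI) (intro continuous_intros)
  have distr_tr: "distr H H (\<lambda>h. h + c) = H" for c :: 'g
  proof (rule measure_eqI)
    fix B assume "B \<in> sets (distr H H (\<lambda>h. h + c))"
    hence B: "B \<in> sets borel" using sH by simp
    have eq: "(\<lambda>h. h + c) -` B = (\<lambda>h. - c + h) ` B"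
    proof
      show "(\<lambda>h. h + c) -` B \<subseteq> (\<lambda>h. - c + h) ` B"
      proof
        fix x assume "x \<in> (\<lambda>h. h + c) -` B"
        moreover have "x = - c + (x + c)" by (simp add: algebra_simps)
        ultimately show "x \<in> (\<lambda>h. - c + h) ` B" by blast
      qed
    qed auto
    have "emeasure (distr H H (\<lambda>h. h + c)) B = emeasure H ((\<lambda>h. h + c) -` B)"
      using emeasure_distr[OF tr_meas] B sH spH by auto
    also have "\<dots> = emeasure H B" using haar B unfolding eq normalized_haar_def by blast
    finally show "emeasure (distr H H (\<lambda>h. h + c)) B = emeasure H B" .
  qed simp
  have int_tr: "(\<integral>\<^sup>+ h. f (h + c) \<partial>H) = integral\<^sup>N H f" if "f \<in> borel_measurable H" for f c
    using nn_integral_distr[OF tr_meas, of f c] that by (simp add: distr_tr)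
  have int_\<beta>: "(\<integral>\<^sup>+ h. f (\<beta> h) \<partial>H) = integral\<^sup>N H f" if "f \<in> borel_measurable H" for f
    using nn_integral_distr[OF \<beta>_meas, of f] that by (simp add: distr_\<beta>)
  have m_invT: "emeasure m (T -` act k -` A) = \<phi> A k" if "A \<in> sets borel" for A k
    unfolding \<phi>_def using m_inv pre_borel[OF that] by blast
  show ?thesis
  proof (intro conjI allI ballI)
    fix g and A :: "'x set" assume A: "A \<in> sets borel"
    have "act g ` A = act (- g) -` A" using img[of "- g"] by simp
    hence "\<phi> (act g ` A) k = \<phi> A (k + - g)" for k
    proof -
      have "act (k + - g) x = act (- g) (act k x)" for x by (metis act_add add.commute)
      thus ?thesis unfolding \<phi>_def \<open>act g ` A = act (- g) -` A\<close> by (simp add: vimage_def)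
    qed
    hence "mtilde H act m (act g ` A) = (\<integral>\<^sup>+ k. \<phi> A (k + - g) \<partial>H)" by (simp add: mt)
    also have "\<dots> = mtilde H act m A" using int_tr[OF phi_measH[OF A], of "- g"] by (simp add: mt)
    finally show "mtilde H act m (act g ` A) = mtilde H act m A" .
  next
    fix g and A :: "'x set" assume A: "A \<in> sets borel"
    have "\<phi> ((\<lambda>x. act g (T x)) -` A) k = \<phi> A (\<beta> k + g)" for k
    proof -
      have "act k -` (\<lambda>x. act g (T x)) -` A = T -` act (\<beta> k + g) -` A"
        by (auto simp: equivariant act_add add.commute)
      thus ?thesis unfolding \<phi>_def using m_invT[OF A] by (simp add: \<phi>_def)
    qed
    hence "mtilde H act m ((\<lambda>x. act g (T x)) -` A) = (\<integral>\<^sup>+ k. (\<lambda>j. \<phi> A (j + g)) (\<beta> k) \<partial>H)"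
      by (simp add: mt)
    also have "\<dots> = (\<integral>\<^sup>+ j. \<phi> A (j + g) \<partial>H)"
      by (rule int_\<beta>) (use phi_measH[OF A] tr_meas in measurable)
    also have "\<dots> = mtilde H act m A" using int_tr[OF phi_measH[OF A]] by (simp add: mt)
    finally show "mtilde H act m ((\<lambda>x. act g (T x)) -` A) = mtilde H act m A" .
  next
    fix g and A :: "'x set" assume A: "A \<in> sets borel"
    have "\<phi> ((\<lambda>x. T (act g x)) -` A) k = \<phi> A (\<beta> (k + g))" for k
    proof -
      have e: "T (act g (act k x)) = act (\<beta> (k + g)) (T x)" for x
        by (metis act_add add.commute equivariant)
      have "act k -` (\<lambda>x. T (act g x)) -` A = T -` act (\<beta> (k + g)) -` A"
        by (auto simp: vimage_def e)
      thus ?thesis unfolding \<phi>_def using m_invT[OF A] by (simp add: \<phi>_def)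
    qed
    hence "mtilde H act m ((\<lambda>x. T (act g x)) -` A) = (\<integral>\<^sup>+ k. (\<lambda>j. \<phi> A (\<beta> j)) (k + g) \<partial>H)"
      by (simp add: mt)
    also have "\<dots> = (\<integral>\<^sup>+ j. \<phi> A (\<beta> j) \<partial>H)"
      by (rule int_tr) (use phi_measH[OF A] \<beta>_meas in measurable)
    also have "\<dots> = mtilde H act m A" using int_\<beta>[OF phi_measH[OF A]] by (simp add: mt)
    finally show "mtilde H act m ((\<lambda>x. T (act g x)) -` A) = mtilde H act m A" .
  qed
qed

end
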